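(* Let $s\ge 2$ be an integer. If $H$ is any graph of order $t$ without isolated vertices, then $r_{pot}(K_s,H)\ge t+s-2$. In particular, for any tree $T_t$ of order $t$, $r_{pot}(K_s,T_t)\ge t+s-2$.
   Context: All graphs are finite and simple. A sequence of nonnegative integers $\pi=(d_1,\dots,d_n)$ (written in nonincreasing order) is graphic if some graph of order $n$ has degree sequence $\pi$; such a graph is a realization of $\pi$. For a graph $H$, a graphic sequence $\pi$ is potentially $H$-graphic if some realization of $\pi$ contains $H$ as a subgraph. For an $N$-term graphic sequence $\pi=(d_1,\dots,d_N)$, its complementary sequence is $\overline{\pi}=(N-1-d_N,\dots,N-1-d_1)$. For graphs $H_1,H_2$, the potential-Ramsey number $r_{pot}(H_1,H_2)$ is the minimum integer $N$ such that for every $N$-term graphic sequence $\pi$, either $\pi$ is potentially $H_1$-graphic or $\overline{\pi}$ is potentially $H_2$-graphic. $K_s$ is the complete graph on $s$ vertices. *)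

theory Defs
  imports Main "HOL-Library.Extended_Nat"
begin

definition simple_graph :: "'a set \<Rightarrow> ('a \<Rightarrow> 'a \<Rightarrow> bool) \<Rightarrow> bool" where
  "simple_graph V E \<longleftrightarrow> finite V \<and> (\<forall>u v. E u v \<longrightarrow> u \<in> V \<and> v \<in> V)
     \<and> (\<forall>u v. E u v \<longrightarrow> E v u) \<and> (\<forall>v. \<not> E v v)"

definition degree :: "'a set \<Rightarrow> ('a \<Rightarrow> 'a \<Rightarrow> bool) \<Rightarrow> 'a \<Rightarrow> nat" where
  "degree V E v = card {u \<in> V. E v u}"

definition realization :: "nat list \<Rightarrow> (nat \<Rightarrow> nat \<Rightarrow> bool) \<Rightarrow> bool" where
  "realization \<pi> E \<longleftrightarrow> simple_graph {0..<length \<pi>} E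
     \<and> (\<forall>i < length \<pi>. degree {0..<length \<pi>} E i = \<pi> ! i)"

definition graphic :: "nat list \<Rightarrow> bool" where
  "graphic \<pi> \<longleftrightarrow> sorted_wrt (\<ge>) \<pi> \<and> (\<exists>E. realization \<pi> E)"

definition contains_subgraph ::
  "'a set \<Rightarrow> ('a \<Rightarrow> 'a \<Rightarrow> bool) \<Rightarrow> 'b set \<Rightarrow> ('b \<Rightarrow> 'b \<Rightarrow> bool) \<Rightarrow> bool" where
  "contains_subgraph VH EH V E \<longleftrightarrow> (\<exists>f. inj_on f VH \<and> f ` VH \<subseteq> V
      \<and> (\<forall>u\<in>VH. \<forall>v\<in>VH. EH u v \<longrightarrow> E (f u) (f v)))"

definition potentially_graphic :: "'a set \<Rightarrow> ('a \<Rightarrow> 'a \<Rightarrow> bool) \<Rightarrow> nat list \<Rightarrow> bool" where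
  "potentially_graphic VH EH \<pi> \<longleftrightarrow> graphic \<pi> \<and>
     (\<exists>E. realization \<pi> E \<and> contains_subgraph VH EH {0..<length \<pi>} E)"

definition complement_seq :: "nat list \<Rightarrow> nat list" where
  "complement_seq \<pi> = map (\<lambda>d. length \<pi> - 1 - d) (rev \<pi>)"

definition complete_graph_edges :: "nat \<Rightarrow> nat \<Rightarrow> bool" where
  "complete_graph_edges u v \<longleftrightarrow> u \<noteq> v"

text \<open>K_s: vertex set {0..<s}, all pairs of distinct vertices adjacent.\<close>
abbreviation K_verts :: "nat \<Rightarrow> nat set" where "K_verts s \<equiv> {0..<s}"

definition rpot_property ::
  "'a set \<Rightarrow> ('a \<Rightarrow> 'a \<Rightarrow> bool) \<Rightarrow> 'b set \<Rightarrow> ('b \<Rightarrow> 'b \<Rightarrow> bool) \<Rightarrow> nat \<Rightarrow> bool" where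
  "rpot_property V1 E1 V2 E2 N \<longleftrightarrow> (\<forall>\<pi>. length \<pi> = N \<and> graphic \<pi> \<longrightarrow>
      potentially_graphic V1 E1 \<pi> \<or> potentially_graphic V2 E2 (complement_seq \<pi>))"

text \<open>Potential-Ramsey number: least N with the property (\<infinity> if there is none).\<close>
definition rpot ::
  "'a set \<Rightarrow> ('a \<Rightarrow> 'a \<Rightarrow> bool) \<Rightarrow> 'b set \<Rightarrow> ('b \<Rightarrow> 'b \<Rightarrow> bool) \<Rightarrow> enat" where
  "rpot V1 E1 V2 E2 = Inf {enat N | N. rpot_property V1 E1 V2 E2 N}"

end

theory Submission
  imports Defs
begin

definition piseq :: "nat \<Rightarrow> nat \<Rightarrow> nat list" where
  "piseq a b = replicate a (a+b-1) @ replicate b a"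

lemma piseq_len[simp]: "length (piseq a b) = a + b"
  by (simp add: piseq_def)

lemma piseq_nth: "i < a + b \<Longrightarrow> piseq a b ! i = (if i < a then a+b-1 else a)"
  by (simp add: piseq_def nth_append)

lemma piseq_sorted: "sorted_wrt (\<ge>) (piseq a b)"
  unfolding sorted_wrt_iff_nth_less
  by (auto simp: piseq_nth)

definition Eab :: "nat \<Rightarrow> nat \<Rightarrow> nat \<Rightarrow> nat \<Rightarrow> bool" where
  "Eab a b u v \<longleftrightarrow> u \<noteq> v \<and> u < a+b \<and> v < a+b \<and> (u < a \<or> v < a)"

lemma piseq_real: "realization (piseq a b) (Eab a b)"
  unfolding realization_def simple_graph_def degree_def
proof (intro conjI allI impI)
  fix i assume i: "i < length (piseq a b)"
  show "card {u \<in> {0..<length (piseq a b)}. Eab a b i u} = piseq a b ! i"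
  proof (cases "i < a")
    case True
    have "{u \<in> {0..<length (piseq a b)}. Eab a b i u} = {0..<a+b} - {i}"
      using True i by (auto simp: Eab_def)
    then show ?thesis using True i by (simp add: piseq_nth)
  next
    case False
    have "{u \<in> {0..<length (piseq a b)}. Eab a b i u} = {0..<a}"
      using False i by (auto simp: Eab_def)
    then show ?thesis using False i by (simp add: piseq_nth)
  qed
qed (auto simp: Eab_def)

lemma piseq_graphic: "graphic (piseq a b)"
  unfolding graphic_def using piseq_sorted piseq_real by blast

lemma compl_nth: "i < a + b \<Longrightarrow> complement_seq (piseq a b) ! i = (if i < b then a+b-1-a else 0)"
  by (simp add: complement_seq_def piseq_def rev_append nth_append)

lemma no_Ks:
  assumes "a \<le> s - 2" "s \<ge> 2"
  shows "\<not> potentially_graphic (K_verts s) complete_graph_edges (piseq a b)"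
proof
  assume "potentially_graphic (K_verts s) complete_graph_edges (piseq a b)"
  then obtain E f where E: "realization (piseq a b) E" and inj: "inj_on f {0..<s}"
    and fs: "f ` {0..<s} \<subseteq> {0..<a+b}"
    and fe: "\<forall>u\<in>{0..<s}. \<forall>v\<in>{0..<s}. complete_graph_edges u v \<longrightarrow> E (f u) (f v)"
    unfolding potentially_graphic_def contains_subgraph_def by auto
  have "f ` {0..<s} \<subseteq> {0..<a}"
  proof
    fix x assume "x \<in> f ` {0..<s}"
    then obtain i where i: "i < s" "x = f i" by auto
    have sub: "f ` ({0..<s} - {i}) \<subseteq> {u \<in> {0..<a+b}. E x u}"
      using fe fs i by (auto simp: complete_graph_edges_def)
    have "card (f ` ({0..<s} - {i})) = s - 1"
      using inj i by (simp add: card_image inj_on_diff)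
    moreover have "card (f ` ({0..<s} - {i})) \<le> card {u \<in> {0..<a+b}. E x u}"
      by (rule card_mono[OF _ sub]) auto
    moreover have xl: "x < a + b" using fs i by (auto simp: image_subset_iff)
    moreover have "card {u \<in> {0..<a+b}. E x u} = piseq a b ! x"
      using E xl unfolding realization_def degree_def by simp
    ultimately have "s - 1 \<le> piseq a b ! x" by simp
    then show "x \<in> {0..<a}" using xl assms by (auto simp: piseq_nth split: if_splits)
  qed
  then have "card (f ` {0..<s}) \<le> a" using card_mono[of "{0..<a}"] by fastforce
  moreover have "card (f ` {0..<s}) = s" using inj by (simp add: card_image)
  ultimately show False using assms by linarith
qed

lemma no_H:
  assumes "simple_graph VH EH" "card VH = t" "VH \<noteq> {}" "\<forall>v\<in>VH. \<exists>u\<in>VH. EH v u" "b < t"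
  shows "\<not> potentially_graphic VH EH (complement_seq (piseq a b))"
proof
  assume "potentially_graphic VH EH (complement_seq (piseq a b))"
  then obtain E f where E: "realization (complement_seq (piseq a b)) E" and inj: "inj_on f VH"
    and fs: "f ` VH \<subseteq> {0..<a+b}"
    and fe: "\<forall>u\<in>VH. \<forall>v\<in>VH. EH u v \<longrightarrow> E (f u) (f v)"
    unfolding potentially_graphic_def contains_subgraph_def by (auto simp: complement_seq_def)
  have len: "length (complement_seq (piseq a b)) = a + b" by (simp add: complement_seq_def)
  have "f ` VH \<subseteq> {0..<b}"
  proof
    fix x assume "x \<in> f ` VH"
    then obtain v where v: "v \<in> VH" "x = f v" by auto
    then obtain u where u: "u \<in> VH" "EH v u" using assms(4) by auto
    have xl: "x < a + b" using fs v by auto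
    have "f u \<in> {w \<in> {0..<a+b}. E x w}" using fe fs u v by auto
    then have "card {w \<in> {0..<a+b}. E x w} \<noteq> 0" by auto
    moreover have "card {w \<in> {0..<a+b}. E x w} = complement_seq (piseq a b) ! x"
      using E xl len unfolding realization_def degree_def by simp
    ultimately show "x \<in> {0..<b}" using xl by (auto simp: compl_nth split: if_splits)
  qed
  then have "card (f ` VH) \<le> b" using card_mono[of "{0..<b}"] by fastforce
  moreover have "card (f ` VH) = t" using inj assms(2) by (simp add: card_image)
  ultimately show False using assms by linarith
qed

theorem proposition3:
  fixes s t :: nat and VH :: "'a set" and EH :: "'a \<Rightarrow> 'a \<Rightarrow> bool"
  assumes "s \<ge> 2"
    and "simple_graph VH EH"
    and "VH \<noteq> {}"
    and "card VH = t"
    and "\<forall>v\<in>VH. \<exists>u\<in>VH. EH v u"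
  shows "rpot (K_verts s) complete_graph_edges VH EH \<ge> enat (t + s - 2)"
  unfolding rpot_def
proof (rule Inf_greatest, clarify)
  fix N assume P: "rpot_property (K_verts s) complete_graph_edges VH EH N"
  show "enat (t + s - 2) \<le> enat N"
  proof (rule ccontr)
    assume "\<not> ?thesis"
    then have N: "N < t + s - 2" by simp
    have t1: "t \<ge> 1" using assms(2,3,4) unfolding simple_graph_def
      by (metis card_0_eq less_one not_less)
    define a where "a = min N (s - 2)"
    define b where "b = N - a"
    have ab: "N = a + b" "a \<le> s - 2" "b < t" using N t1 unfolding a_def b_def by auto
    have "length (piseq a b) = N \<and> graphic (piseq a b)" using ab piseq_graphic by simp
    then have "potentially_graphic (K_verts s) complete_graph_edges (piseq a b) \<or>
       potentially_graphic VH EH (complement_seq (piseq a b))"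
      using P unfolding rpot_property_def by blast
    then show False using no_Ks[OF ab(2) assms(1)] no_H[OF assms(2,4,3,5) ab(3)] by blast
  qed
qed

end
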